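(* Let $G$ be a finite abelian group, $n$ a positive integer, and $\mathcal M=(I_n(\hat G),\le)$. Then $\mathrm{Rep}(\mathcal M,\hat G)$ is the full subcategory of $\mathrm{Rep}(I_n(\hat G),\hat G)$ whose objects are direct sums of the simple object $\hat G^{\oplus n}$.
   Context: $\hat G=G\sqcup\{0\}$ with $0$ absorbing. $\mathrm{Vect}_{\hat G}$: objects are finite pointed sets with an action of $\hat G$ ($0v=0$, $g0=0$) such that $G$ acts freely on nonzero elements; morphisms $f$ satisfy $f(0)=0$, $f(gv)=gf(v)$, $f(v_1)=f(v_2)\neq0\Rightarrow Gv_1=Gv_2$; $\oplus$ is disjoint union with zeros identified. $I_n(\hat G)$ is the monoid of $n\times n$ matrices over $\hat G$ with at most one nonzero entry in each row and column, under matrix multiplication, with $G$ as scalar matrices. $\hat G^{\oplus n}=\{0\}\cup\{g\mathbf e_i: g\in G, 1\le i\le n\}$ with $I_n(\hat G)$ acting by matrix multiplication. $\mathrm{Rep}(I_n(\hat G),\hat G)$: objects $V$ of $\mathrm{Vect}_{\hat G}$ with an action $a\mapsto V(a)$ of $I_n(\hat G)$ by morphisms of $\mathrm{Vect}_{\hat G}$, zero matrix acting as zero and $g\in G$ as the scalar $g$; morphisms are equivariant morphisms. On $I_n(\hat G)$, and more generally on $\mathrm{End}_{\hat G}(V)$, the partial order is $A\le B$ iff for all $x$, $Ax\neq0$ implies $Bx=Ax$. $\mathrm{Rep}(\mathcal M,\hat G)$ is the full subcategory of $\mathrm{Rep}(I_n(\hat G),\hat G)$ of those $V$ such that whenever $\bigvee_{a\in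 I}a$ exists in $I_n(\hat G)$ for a subset $I$, the join $\bigvee_{a\in I}V(a)$ exists in $\mathrm{End}_{\hat G}(V)$ and equals $V(\bigvee_{a\in I}a)$. *)

theory Defs
  imports "HOL-Algebra.Group"
begin

text \<open>Elements of \<open>G\<hat>\<close> = G plus an absorbing 0 are encoded as \<open>'g option\<close>,
  with None playing the role of 0.  An n x n matrix over \<open>G\<hat>\<close> is a function
  \<open>nat \<Rightarrow> nat \<Rightarrow> 'g option\<close>, all entries outside the index range being None.\<close>

type_synonym 'g mat = "nat \<Rightarrow> nat \<Rightarrow> 'g option"

text \<open>A pointed finite G-set together with an action of matrices.
  For plain objects of Vect_Ghat the field mact is ignored.\<close>
record ('g, 'v) gobj =
  carr :: "'v set"
  zer  :: 'v
  gact :: "'g \<Rightarrow> 'v \<Rightarrow> 'v"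
  mact :: "'g mat \<Rightarrow> 'v \<Rightarrow> 'v"

definition vect_obj :: "('g, 'b) monoid_scheme \<Rightarrow> ('g, 'v, 'z) gobj_scheme \<Rightarrow> bool" where
  "vect_obj G V \<longleftrightarrow>
     finite (carr V) \<and> zer V \<in> carr V \<and>
     (\<forall>g\<in>carrier G. \<forall>v\<in>carr V. gact V g v \<in> carr V) \<and>
     (\<forall>g\<in>carrier G. gact V g (zer V) = zer V) \<and>
     (\<forall>v\<in>carr V. gact V \<one>\<^bsub>G\<^esub> v = v) \<and>
     (\<forall>g\<in>carrier G. \<forall>h\<in>carrier G. \<forall>v\<in>carr V.
         gact V (g \<otimes>\<^bsub>G\<^esub> h) v = gact V g (gact V h v)) \<and>
     (\<forall>g\<in>carrier G. \<forall>v\<in>carr V. v \<noteq> zer V \<longrightarrow> gact V g v = v \<longrightarrow> g = \<one>\<^bsub>G\<^esub>)"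

definition orbit :: "('g, 'b) monoid_scheme \<Rightarrow> ('g, 'v, 'z) gobj_scheme \<Rightarrow> 'v \<Rightarrow> 'v set" where
  "orbit G V v = (\<lambda>g. gact V g v) ` carrier G"

definition vect_mor :: "('g, 'b) monoid_scheme \<Rightarrow> ('g, 'v, 'z) gobj_scheme \<Rightarrow> ('g, 'w, 'y) gobj_scheme
                        \<Rightarrow> ('v \<Rightarrow> 'w) \<Rightarrow> bool" where
  "vect_mor G V W f \<longleftrightarrow>
     (\<forall>v\<in>carr V. f v \<in> carr W) \<and> f (zer V) = zer W \<and>
     (\<forall>g\<in>carrier G. \<forall>v\<in>carr V. f (gact V g v) = gact W g (f v)) \<and>
     (\<forall>v1\<in>carr V. \<forall>v2\<in>carr V. f v1 = f v2 \<longrightarrow> f v1 \<noteq> zer W \<longrightarrow> orbit G V v1 = orbit G V v2)"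

definition In_mat :: "('g, 'b) monoid_scheme \<Rightarrow> nat \<Rightarrow> 'g mat \<Rightarrow> bool" where
  "In_mat G n A \<longleftrightarrow>
     (\<forall>i j. A i j \<noteq> None \<longrightarrow> i < n \<and> j < n \<and> the (A i j) \<in> carrier G) \<and>
     (\<forall>i j j'. A i j \<noteq> None \<longrightarrow> A i j' \<noteq> None \<longrightarrow> j = j') \<and>
     (\<forall>i i' j. A i j \<noteq> None \<longrightarrow> A i' j \<noteq> None \<longrightarrow> i = i')"

text \<open>Matrix product: the sum over k has at most one nonzero term.\<close>
definition mmul :: "('g, 'b) monoid_scheme \<Rightarrow> nat \<Rightarrow> 'g mat \<Rightarrow> 'g mat \<Rightarrow> 'g mat" where
  "mmul G n A B = (\<lambda>i j.
     if \<exists>k<n. A i k \<noteq> None \<and> B k j \<noteq> None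
     then (let k = (SOME k. k < n \<and> A i k \<noteq> None \<and> B k j \<noteq> None)
           in Some (the (A i k) \<otimes>\<^bsub>G\<^esub> the (B k j)))
     else None)"

definition zero_mat :: "'g mat" where
  "zero_mat = (\<lambda>i j. None)"

definition scal_mat :: "nat \<Rightarrow> 'g \<Rightarrow> 'g mat" where
  "scal_mat n g = (\<lambda>i j. if i = j \<and> i < n then Some g else None)"

text \<open>The object \<open>G\<hat>^{\<oplus>n}\<close>: None is 0 and Some (g, i) is g e_i.\<close>
definition Ghat_n :: "('g, 'b) monoid_scheme \<Rightarrow> nat \<Rightarrow> ('g, ('g \<times> nat) option) gobj" where
  "Ghat_n G n =
     \<lparr> carr = insert None {Some (g, i) | g i. g \<in> carrier G \<and> i < n},
       zer = None,
       gact = (\<lambda>h x. case x of None \<Rightarrow> None | Some (g, i) \<Rightarrow> Some (h \<otimes>\<^bsub>G\<^esub> g, i)),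
       mact = (\<lambda>A x. case x of None \<Rightarrow> None
                 | Some (g, i) \<Rightarrow>
                     (if \<exists>j. A j i \<noteq> None
                      then (let j = (THE j. A j i \<noteq> None) in Some (the (A j i) \<otimes>\<^bsub>G\<^esub> g, j))
                      else None)) \<rparr>"

definition rep_obj :: "('g, 'b) monoid_scheme \<Rightarrow> nat \<Rightarrow> ('g, 'v, 'z) gobj_scheme \<Rightarrow> bool" where
  "rep_obj G n V \<longleftrightarrow>
     vect_obj G V \<and>
     (\<forall>A. In_mat G n A \<longrightarrow> vect_mor G V V (mact V A)) \<and>
     (\<forall>A B. In_mat G n A \<longrightarrow> In_mat G n B \<longrightarrow>
        (\<forall>v\<in>carr V. mact V (mmul G n A B) v = mact V A (mact V B v))) \<and>
     (\<forall>v\<in>carr V. mact V zero_mat v = zer V) \<and>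
     (\<forall>g\<in>carrier G. \<forall>v\<in>carr V. mact V (scal_mat n g) v = gact V g v)"

definition rep_mor :: "('g, 'b) monoid_scheme \<Rightarrow> nat \<Rightarrow> ('g, 'v, 'z) gobj_scheme \<Rightarrow> ('g, 'w, 'y) gobj_scheme
                        \<Rightarrow> ('v \<Rightarrow> 'w) \<Rightarrow> bool" where
  "rep_mor G n V W f \<longleftrightarrow> vect_mor G V W f \<and>
     (\<forall>A. In_mat G n A \<longrightarrow> (\<forall>v\<in>carr V. f (mact V A v) = mact W A (f v)))"

definition rep_iso :: "('g, 'b) monoid_scheme \<Rightarrow> nat \<Rightarrow> ('g, 'v, 'z) gobj_scheme \<Rightarrow> ('g, 'w, 'y) gobj_scheme
                        \<Rightarrow> bool" where
  "rep_iso G n V W \<longleftrightarrow> (\<exists>f h. rep_mor G n V W f \<and> rep_mor G n W V h \<and>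
     (\<forall>v\<in>carr V. h (f v) = v) \<and> (\<forall>w\<in>carr W. f (h w) = w))"

text \<open>Direct sum of a family of objects: disjoint union with the zeros identified.\<close>
definition dsum :: "'c set \<Rightarrow> ('c \<Rightarrow> ('g, 'v, 'z) gobj_scheme) \<Rightarrow> ('g, ('c \<times> 'v) option) gobj" where
  "dsum C F =
     \<lparr> carr = insert None {Some (c, v) | c v. c \<in> C \<and> v \<in> carr (F c) \<and> v \<noteq> zer (F c)},
       zer = None,
       gact = (\<lambda>g x. case x of None \<Rightarrow> None
                | Some (c, v) \<Rightarrow> (if gact (F c) g v = zer (F c) then None
                                   else Some (c, gact (F c) g v))),
       mact = (\<lambda>A x. case x of None \<Rightarrow> None
                | Some (c, v) \<Rightarrow> (if mact (F c) A v = zer (F c) then None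
                                   else Some (c, mact (F c) A v))) \<rparr>"

definition le_End :: "('g, 'v, 'z) gobj_scheme \<Rightarrow> ('v \<Rightarrow> 'v) \<Rightarrow> ('v \<Rightarrow> 'v) \<Rightarrow> bool" where
  "le_End V A B \<longleftrightarrow> (\<forall>x\<in>carr V. A x \<noteq> zer V \<longrightarrow> B x = A x)"

definition is_join_End :: "('g, 'b) monoid_scheme \<Rightarrow> ('g, 'v, 'z) gobj_scheme \<Rightarrow> ('v \<Rightarrow> 'v) set
                            \<Rightarrow> ('v \<Rightarrow> 'v) \<Rightarrow> bool" where
  "is_join_End G V S J \<longleftrightarrow> vect_mor G V V J \<and> (\<forall>A\<in>S. le_End V A J) \<and>
     (\<forall>B. vect_mor G V V B \<longrightarrow> (\<forall>A\<in>S. le_End V A B) \<longrightarrow> le_End V J B)"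

definition le_In :: "('g, 'b) monoid_scheme \<Rightarrow> nat \<Rightarrow> 'g mat \<Rightarrow> 'g mat \<Rightarrow> bool" where
  "le_In G n A B = le_End (Ghat_n G n) (mact (Ghat_n G n) A) (mact (Ghat_n G n) B)"

definition is_join_In :: "('g, 'b) monoid_scheme \<Rightarrow> nat \<Rightarrow> 'g mat set \<Rightarrow> 'g mat \<Rightarrow> bool" where
  "is_join_In G n S J \<longleftrightarrow> In_mat G n J \<and> (\<forall>A\<in>S. le_In G n A J) \<and>
     (\<forall>B. In_mat G n B \<longrightarrow> (\<forall>A\<in>S. le_In G n A B) \<longrightarrow> le_In G n J B)"

definition rep_M :: "('g, 'b) monoid_scheme \<Rightarrow> nat \<Rightarrow> ('g, 'v, 'z) gobj_scheme \<Rightarrow> bool" where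
  "rep_M G n V \<longleftrightarrow> rep_obj G n V \<and>
     (\<forall>S J. S \<subseteq> {A. In_mat G n A} \<longrightarrow> is_join_In G n S J \<longrightarrow>
        is_join_End G V (mact V ` S) (mact V J))"

end

theory Submission
  imports Defs
begin


definition Eu :: "('g, 'b) monoid_scheme \<Rightarrow> nat \<Rightarrow> nat \<Rightarrow> 'g mat" where
  "Eu G i j = (\<lambda>p q. if p = i \<and> q = j then Some \<one>\<^bsub>G\<^esub> else None)"

context comm_group
begin

lemma In_mat_Eu: "i < n \<Longrightarrow> j < n \<Longrightarrow> In_mat G n (Eu G i j)"
  unfolding In_mat_def Eu_def by (simp split: if_splits)

lemma In_mat_scal: "a \<in> carrier G \<Longrightarrow> In_mat G n (scal_mat n a)"
  unfolding In_mat_def scal_mat_def by auto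

lemma In_mat_zero: "In_mat G n zero_mat"
  unfolding In_mat_def zero_mat_def by auto

lemma mmul_eq:
  assumes "In_mat G n A" "k < n" "A i k \<noteq> None" "B k j \<noteq> None"
  shows "mmul G n A B i j = Some (the (A i k) \<otimes> the (B k j))"
proof -
  have ex: "\<exists>k<n. A i k \<noteq> None \<and> B k j \<noteq> None" using assms by auto
  let ?k = "SOME k. k < n \<and> A i k \<noteq> None \<and> B k j \<noteq> None"
  have "?k < n \<and> A i ?k \<noteq> None \<and> B ?k j \<noteq> None" using someI_ex[OF ex[unfolded Bex_def[symmetric]]]
    using ex by (metis (mono_tags, lifting) someI_ex)
  hence "?k = k" using assms(1,3) unfolding In_mat_def by blast
  thus ?thesis unfolding mmul_def using ex by (simp add: Let_def)
qed

lemma mmul_none: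
  assumes "\<forall>k<n. A i k = None \<or> B k j = None"
  shows "mmul G n A B i j = None"
  using assms unfolding mmul_def by auto

lemma mmul_Eu_right:
  assumes "In_mat G n X" "l < n"
  shows "mmul G n X (Eu G l m) = (\<lambda>p q. if q = m then X p l else None)"
proof (intro ext)
  fix p q
  show "mmul G n X (Eu G l m) p q = (if q = m then X p l else None)"
  proof (cases "q = m \<and> X p l \<noteq> None")
    case True
    then have "mmul G n X (Eu G l m) p q = Some (the (X p l) \<otimes> \<one>)"
      using mmul_eq[OF assms(1) assms(2), of p "Eu G l m" q] by (simp add: Eu_def)
    moreover have "the (X p l) \<in> carrier G" using assms(1) True unfolding In_mat_def by blast
    ultimately show ?thesis using True by auto
  next
    case False
    then show ?thesis by (subst mmul_none) (auto simp: Eu_def)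
  qed
qed

lemma mact_Ghat_some:
  assumes "A j l \<noteq> None" "\<forall>j'. A j' l \<noteq> None \<longrightarrow> j' = j"
  shows "mact (Ghat_n G n) A (Some (g, l)) = Some (the (A j l) \<otimes> g, j)"
proof -
  have t: "(THE j. A j l \<noteq> None) = j" using assms by blast
  have ex: "\<exists>j. A j l \<noteq> None" using assms by blast
  show ?thesis unfolding Ghat_n_def by (simp add: Let_def t ex del: not_None_eq)
qed

lemma mact_Ghat_none:
  assumes "\<forall>j. A j l = None"
  shows "mact (Ghat_n G n) A (Some (g, l)) = None"
  using assms unfolding Ghat_n_def by simp

end

abbreviation DD :: "('g, 'b) monoid_scheme \<Rightarrow> nat \<Rightarrow> nat \<Rightarrow> ('g, (nat \<times> ('g \<times> nat) option) option) gobj" where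
  "DD G n k \<equiv> dsum {..<k} (\<lambda>_. Ghat_n G n)"

lemma carr_DD: "carr (DD G n k) = insert None {Some (c, Some (g, i)) | c g i. c < k \<and> g \<in> carrier G \<and> i < n}"
  unfolding dsum_def Ghat_n_def by auto

lemma carr_DD_img: "carr (DD G n k) = insert None ((\<lambda>(c, g, i). Some (c, Some (g, i))) ` ({..<k} \<times> carrier G \<times> {..<n}))"
  unfolding carr_DD by (auto simp: image_iff)

lemma zer_DD[simp]: "zer (DD G n k) = None"
  unfolding dsum_def by simp

lemma gact_DD_None[simp]: "gact (DD G n k) h None = None"
  unfolding dsum_def by simp

lemma gact_DD_Some[simp]: "gact (DD G n k) h (Some (c, Some (g, i))) = Some (c, Some (h \<otimes>\<^bsub>G\<^esub> g, i))"
  unfolding dsum_def Ghat_n_def by simp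

lemma mact_DD_None[simp]: "mact (DD G n k) A None = None"
  unfolding dsum_def by simp

context comm_group
begin

lemma mact_DD_some:
  assumes "A j l \<noteq> None" "\<forall>j'. A j' l \<noteq> None \<longrightarrow> j' = j"
  shows "mact (DD G n k) A (Some (c, Some (g, l))) = Some (c, Some (the (A j l) \<otimes> g, j))"
proof -
  have "mact (Ghat_n G n) A (Some (g, l)) = Some (the (A j l) \<otimes> g, j)" using mact_Ghat_some[of A j l n g] assms by blast
  moreover have "zer (Ghat_n G n) = None" by (simp add: Ghat_n_def)
  ultimately show ?thesis unfolding dsum_def by simp
qed

lemma mact_DD_none:
  assumes "\<forall>j. A j l = None"
  shows "mact (DD G n k) A (Some (c, Some (g, l))) = None"
proof -
  have "mact (Ghat_n G n) A (Some (g, l)) = None" using mact_Ghat_none[of A l n g] assms by blast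
  moreover have "zer (Ghat_n G n) = None" by (simp add: Ghat_n_def)
  ultimately show ?thesis unfolding dsum_def by simp
qed

lemma carr_DD_cases:
  assumes "x \<in> carr (DD G n k)"
  obtains "x = None" | c g i where "x = Some (c, Some (g, i))" "c < k" "g \<in> carrier G" "i < n"
  using assms unfolding carr_DD by blast

lemma orbit_DD:
  assumes "g \<in> carrier G"
  shows "orbit G (DD G n k) (Some (c, Some (g, i))) = {Some (c, Some (x, i)) | x. x \<in> carrier G}"
proof
  show "orbit G (DD G n k) (Some (c, Some (g, i))) \<subseteq> {Some (c, Some (x, i)) | x. x \<in> carrier G}"
    unfolding orbit_def using assms by auto
next
  show "{Some (c, Some (x, i)) | x. x \<in> carrier G} \<subseteq> orbit G (DD G n k) (Some (c, Some (g, i)))"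
  proof
    fix y assume "y \<in> {Some (c, Some (x, i)) | x. x \<in> carrier G}"
    then obtain x where x: "y = Some (c, Some (x, i))" "x \<in> carrier G" by blast
    have "(x \<otimes> inv g) \<otimes> g = x" using x assms by (simp add: m_assoc)
    hence "y = gact (DD G n k) (x \<otimes> inv g) (Some (c, Some (g, i)))" using x by simp
    thus "y \<in> orbit G (DD G n k) (Some (c, Some (g, i)))" unfolding orbit_def using x assms by blast
  qed
qed

lemma vect_obj_DD: assumes fin: "finite (carrier G)" shows "vect_obj G (DD G n k)"
  unfolding vect_obj_def
proof (intro conjI ballI impI)
  show "finite (carr (DD G n k))" unfolding carr_DD_img using fin by simp
  show "zer (DD G n k) \<in> carr (DD G n k)" unfolding carr_DD by simp
  fix g assume g: "g \<in> carrier G"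
  { fix v assume "v \<in> carr (DD G n k)"
    then show "gact (DD G n k) g v \<in> carr (DD G n k)"
      by (cases rule: carr_DD_cases) (auto simp: carr_DD g) }
  show "gact (DD G n k) g (zer (DD G n k)) = zer (DD G n k)" by simp
  { fix h v assume h: "h \<in> carrier G" and v: "v \<in> carr (DD G n k)"
    from v show "gact (DD G n k) (g \<otimes> h) v = gact (DD G n k) g (gact (DD G n k) h v)"
      by (cases rule: carr_DD_cases) (auto simp: g h m_assoc) }
  { fix v assume v: "v \<in> carr (DD G n k)" "v \<noteq> zer (DD G n k)" "gact (DD G n k) g v = v"
    from v(1) show "g = \<one>"
    proof (cases rule: carr_DD_cases)
      case 1 then show ?thesis using v by simp
    next
      case (2 c x i) then show ?thesis using v g by simp
    qed }
next
  fix v assume "v \<in> carr (DD G n k)"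
  then show "gact (DD G n k) \<one> v = v" by (cases rule: carr_DD_cases) auto
qed


lemma In_mat_col: "In_mat G n A \<Longrightarrow> A j i \<noteq> None \<Longrightarrow> \<forall>j'. A j' i \<noteq> None \<longrightarrow> j' = j"
  unfolding In_mat_def by blast

lemma In_mat_row: "In_mat G n A \<Longrightarrow> A j i \<noteq> None \<Longrightarrow> A j i' \<noteq> None \<Longrightarrow> i = i'"
  unfolding In_mat_def by blast

lemma In_mat_entry: "In_mat G n A \<Longrightarrow> A j i \<noteq> None \<Longrightarrow> j < n \<and> i < n \<and> the (A j i) \<in> carrier G"
  unfolding In_mat_def by blast

lemma mact_DD_In:
  assumes "In_mat G n A" "A j i \<noteq> None"
  shows "mact (DD G n k) A (Some (c, Some (g, i))) = Some (c, Some (the (A j i) \<otimes> g, j))"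
  using mact_DD_some[where A=A and j=j and l=i and n=n and k=k and c=c and g=g] In_mat_col[OF assms] assms(2) by blast

lemma mact_DD_cases:
  assumes "In_mat G n A"
  obtains j where "A j i \<noteq> None" "j < n" "the (A j i) \<in> carrier G"
     "mact (DD G n k) A (Some (c, Some (g, i))) = Some (c, Some (the (A j i) \<otimes> g, j))"
   | "\<forall>j. A j i = None" "mact (DD G n k) A (Some (c, Some (g, i))) = None"
proof (cases "\<exists>j. A j i \<noteq> None")
  case True
  then obtain j where j: "A j i \<noteq> None" by blast
  show ?thesis using that(1)[OF j] In_mat_entry[OF assms j] mact_DD_In[OF assms j] by blast
next
  case False
  hence h: "\<forall>j. A j i = None" by blast
  have m: "mact (DD G n k) A (Some (c, Some (g, i))) = None"
    using mact_DD_none[where A=A and l=i and n=n and k=k and c=c and g=g] h by blast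
  show ?thesis by (rule that(2)[OF h m])
qed

lemma vect_mor_mact_DD:
  assumes A: "In_mat G n A"
  shows "vect_mor G (DD G n k) (DD G n k) (mact (DD G n k) A)"
  unfolding vect_mor_def
proof (intro conjI ballI impI)
  fix v assume "v \<in> carr (DD G n k)"
  then show "mact (DD G n k) A v \<in> carr (DD G n k)"
  proof (cases rule: carr_DD_cases)
    case (2 c g i)
    then show ?thesis by (cases rule: mact_DD_cases[OF A, of i k c g]) (auto simp: carr_DD)
  qed (simp add: carr_DD)
next
  show "mact (DD G n k) A (zer (DD G n k)) = zer (DD G n k)" by simp
next
  fix h v assume h: "h \<in> carrier G" and "v \<in> carr (DD G n k)"
  from this(2) show "mact (DD G n k) A (gact (DD G n k) h v) = gact (DD G n k) h (mact (DD G n k) A v)"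
  proof (cases rule: carr_DD_cases)
    case (2 c g i)
    then show ?thesis
    proof (cases rule: mact_DD_cases[OF A, of i k c g])
      case (1 j)
      then show ?thesis using 2 h mact_DD_In[OF A 1(1), of k c "h \<otimes> g"]
        by (simp add: m_assoc[symmetric] m_comm)
    next
      case 2
      then show ?thesis using \<open>v = _\<close> mact_DD_none[where A=A and l=i and n=n and k=k and c=c and g="h \<otimes> g"] by simp
    qed
  qed simp
next
  fix v1 v2 assume v1: "v1 \<in> carr (DD G n k)" and v2: "v2 \<in> carr (DD G n k)"
    and eq: "mact (DD G n k) A v1 = mact (DD G n k) A v2"
    and nz: "mact (DD G n k) A v1 \<noteq> zer (DD G n k)"
  from v1 obtain c1 g1 i1 where x1: "v1 = Some (c1, Some (g1, i1))" "g1 \<in> carrier G"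
    using nz by (cases rule: carr_DD_cases) auto
  from v2 obtain c2 g2 i2 where x2: "v2 = Some (c2, Some (g2, i2))" "g2 \<in> carrier G"
    using nz eq by (cases rule: carr_DD_cases) auto
  obtain j1 where j1: "A j1 i1 \<noteq> None" "mact (DD G n k) A v1 = Some (c1, Some (the (A j1 i1) \<otimes> g1, j1))"
    using nz x1 by (cases rule: mact_DD_cases[OF A, of i1 k c1 g1]) auto
  obtain j2 where j2: "A j2 i2 \<noteq> None" "mact (DD G n k) A v2 = Some (c2, Some (the (A j2 i2) \<otimes> g2, j2))"
    using nz eq x2 by (cases rule: mact_DD_cases[OF A, of i2 k c2 g2]) auto
  have "c1 = c2" "j1 = j2" using eq j1 j2 by auto
  hence "i1 = i2" using In_mat_row[OF A] j1 j2 by blast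
  then show "orbit G (DD G n k) v1 = orbit G (DD G n k) v2"
    using x1 x2 orbit_DD \<open>c1 = c2\<close> by simp
qed

lemma rep_obj_DD: assumes fin: "finite (carrier G)" shows "rep_obj G n (DD G n k)"
  unfolding rep_obj_def
proof (intro conjI allI impI ballI)
  show "vect_obj G (DD G n k)" by (rule vect_obj_DD[OF fin])
next
  fix A assume "In_mat G n A" then show "vect_mor G (DD G n k) (DD G n k) (mact (DD G n k) A)"
    by (rule vect_mor_mact_DD)
next
  fix v assume "v \<in> carr (DD G n k)"
  then show "mact (DD G n k) zero_mat v = zer (DD G n k)"
    by (cases rule: carr_DD_cases) (auto intro: mact_DD_none simp: zero_mat_def)
next
  fix g v assume g: "g \<in> carrier G" and "v \<in> carr (DD G n k)"
  from this(2) show "mact (DD G n k) (scal_mat n g) v = gact (DD G n k) g v"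
  proof (cases rule: carr_DD_cases)
    case (2 c x i)
    have "scal_mat n g i i \<noteq> None" using 2 by (simp add: scal_mat_def)
    from mact_DD_In[OF In_mat_scal[OF g] this] show ?thesis using 2 by (simp add: scal_mat_def)
  qed simp
next
  fix A B v assume A: "In_mat G n A" and B: "In_mat G n B" and "v \<in> carr (DD G n k)"
  from this(3) show "mact (DD G n k) (mmul G n A B) v = mact (DD G n k) A (mact (DD G n k) B v)"
  proof (cases rule: carr_DD_cases)
    case (2 c g i)
    note cv = 2
    show ?thesis
    proof (cases rule: mact_DD_cases[OF B, of i k c g])
      case (1 l)
      note l = 1
      show ?thesis
      proof (cases rule: mact_DD_cases[OF A, of l k c "the (B l i) \<otimes> g"])
        case (1 j)
        have mm: "mmul G n A B j i = Some (the (A j l) \<otimes> the (B l i))"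
          using mmul_eq[where A=A and B=B and n=n and k=l and i=j and j=i] A l 1 by blast
        have uq: "\<forall>j'. mmul G n A B j' i \<noteq> None \<longrightarrow> j' = j"
        proof (intro allI impI)
          fix j' assume "mmul G n A B j' i \<noteq> None"
          then obtain l' where "l' < n" "A j' l' \<noteq> None" "B l' i \<noteq> None"
            unfolding mmul_def by (auto split: if_splits)
          then show "j' = j" using In_mat_col[OF B l(1)] In_mat_col[OF A 1(1)] by blast
        qed
        have "mact (DD G n k) (mmul G n A B) v = Some (c, Some ((the (A j l) \<otimes> the (B l i)) \<otimes> g, j))"
          using mact_DD_some[where A="mmul G n A B" and j=j and l=i and n=n and k=k and c=c and g=g] mm uq 2 by simp
        then show ?thesis using 1 l 2 by (simp add: m_assoc)
      next
        case 2
        note a = 2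
        have "\<forall>j'. mmul G n A B j' i = None"
        proof
          fix j'
          show "mmul G n A B j' i = None"
          proof (rule mmul_none, intro allI impI)
            fix l' assume "l' < n"
            show "A j' l' = None \<or> B l' i = None"
              using In_mat_col[OF B l(1)] a(1) by blast
          qed
        qed
        then show ?thesis using mact_DD_none[where A="mmul G n A B" and l=i and n=n and k=k and c=c and g=g] cv(1) l a by simp
      qed
    next
      case 2
      note b = 2
      have "\<forall>j'. mmul G n A B j' i = None"
        using b(1) by (auto intro: mmul_none)
      then show ?thesis using mact_DD_none[where A="mmul G n A B" and l=i and n=n and k=k and c=c and g=g] cv(1) b by simp
    qed
  qed simp
qed


end



context comm_group begin

lemma vo_zer: "vect_obj G V \<Longrightarrow> zer V \<in> carr V"
  unfolding vect_obj_def by blast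
lemma vo_closed: "vect_obj G V \<Longrightarrow> g \<in> carrier G \<Longrightarrow> v \<in> carr V \<Longrightarrow> gact V g v \<in> carr V"
  unfolding vect_obj_def by blast
lemma vo_gzer: "vect_obj G V \<Longrightarrow> g \<in> carrier G \<Longrightarrow> gact V g (zer V) = zer V"
  unfolding vect_obj_def by blast
lemma vo_one: "vect_obj G V \<Longrightarrow> v \<in> carr V \<Longrightarrow> gact V \<one> v = v"
  unfolding vect_obj_def by blast
lemma vo_mult: "vect_obj G V \<Longrightarrow> g \<in> carrier G \<Longrightarrow> h \<in> carrier G \<Longrightarrow> v \<in> carr V \<Longrightarrow>
    gact V (g \<otimes> h) v = gact V g (gact V h v)"
  unfolding vect_obj_def by blast
lemma vo_free: "vect_obj G V \<Longrightarrow> g \<in> carrier G \<Longrightarrow> v \<in> carr V \<Longrightarrow> v \<noteq> zer V \<Longrightarrow> gact V g v = v \<Longrightarrow> g = \<one>"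
  unfolding vect_obj_def by blast
lemma vo_inv: "vect_obj G V \<Longrightarrow> g \<in> carrier G \<Longrightarrow> v \<in> carr V \<Longrightarrow> gact V (inv g) (gact V g v) = v"
  using vo_mult[of V "inv g" g v] vo_one[of V v] by simp
lemma vo_nz: "vect_obj G V \<Longrightarrow> g \<in> carrier G \<Longrightarrow> v \<in> carr V \<Longrightarrow> v \<noteq> zer V \<Longrightarrow> gact V g v \<noteq> zer V"
  using vo_inv[of V g v] vo_gzer[of V "inv g"] by auto

lemma ro_vo: "rep_obj G n V \<Longrightarrow> vect_obj G V"
  unfolding rep_obj_def by blast
lemma ro_mor: "rep_obj G n V \<Longrightarrow> In_mat G n A \<Longrightarrow> vect_mor G V V (mact V A)"
  unfolding rep_obj_def by blast
lemma ro_closed: "rep_obj G n V \<Longrightarrow> In_mat G n A \<Longrightarrow> v \<in> carr V \<Longrightarrow> mact V A v \<in> carr V"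
  using ro_mor unfolding vect_mor_def by blast
lemma ro_zer: "rep_obj G n V \<Longrightarrow> In_mat G n A \<Longrightarrow> mact V A (zer V) = zer V"
  using ro_mor unfolding vect_mor_def by blast
lemma ro_gact: "rep_obj G n V \<Longrightarrow> In_mat G n A \<Longrightarrow> g \<in> carrier G \<Longrightarrow> v \<in> carr V \<Longrightarrow>
    mact V A (gact V g v) = gact V g (mact V A v)"
  using ro_mor unfolding vect_mor_def by blast
lemma ro_mul: "rep_obj G n V \<Longrightarrow> In_mat G n A \<Longrightarrow> In_mat G n B \<Longrightarrow> v \<in> carr V \<Longrightarrow>
    mact V (mmul G n A B) v = mact V A (mact V B v)"
  unfolding rep_obj_def by blast
lemma ro_zero: "rep_obj G n V \<Longrightarrow> v \<in> carr V \<Longrightarrow> mact V zero_mat v = zer V"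
  unfolding rep_obj_def by blast
lemma ro_scal: "rep_obj G n V \<Longrightarrow> g \<in> carrier G \<Longrightarrow> v \<in> carr V \<Longrightarrow> mact V (scal_mat n g) v = gact V g v"
  unfolding rep_obj_def by blast
lemma ro_id: "rep_obj G n V \<Longrightarrow> v \<in> carr V \<Longrightarrow> mact V (scal_mat n \<one>) v = v"
  using ro_scal[of n V \<one> v] ro_vo vo_one by fastforce

lemma carr_Ghat: "carr (Ghat_n G n) = insert None {Some (g, i) | g i. g \<in> carrier G \<and> i < n}"
  unfolding Ghat_n_def by simp

lemma mact_Ghat_Eu: "mact (Ghat_n G n) (Eu G i j) (Some (g, l)) = (if l = j then Some (\<one> \<otimes> g, i) else None)"
proof (cases "l = j")
  case True
  have a: "Eu G i j i l \<noteq> None" using True by (simp add: Eu_def)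
  have b: "\<forall>j'. Eu G i j j' l \<noteq> None \<longrightarrow> j' = i" by (simp add: Eu_def)
  have c: "the (Eu G i j i l) = \<one>" using True by (simp add: Eu_def)
  show ?thesis using mact_Ghat_some[where A="Eu G i j" and j=i and l=l and n=n and g=g, OF a b] c True by simp
next
  case False
  have a: "\<forall>j'. Eu G i j j' l = None" using False by (simp add: Eu_def)
  show ?thesis using mact_Ghat_none[where A="Eu G i j" and l=l and n=n and g=g, OF a] False by simp
qed

lemma mact_Ghat_scal: "mact (Ghat_n G n) (scal_mat n a) (Some (g, l)) = (if l < n then Some (a \<otimes> g, l) else None)"
proof (cases "l < n")
  case True
  then show ?thesis using mact_Ghat_some[where A="scal_mat n a" and j=l and l=l and n=n and g=g]
    by (simp add: scal_mat_def)
next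
  case False
  then show ?thesis using mact_Ghat_none[where A="scal_mat n a" and l=l and n=n and g=g]
    by (simp add: scal_mat_def)
qed

lemma mact_Ghat_None[simp]: "mact (Ghat_n G n) A None = None"
  unfolding Ghat_n_def by simp

definition diagP :: "('g, 'b) monoid_scheme \<Rightarrow> nat \<Rightarrow> ('g, 'v, 'z) gobj_scheme \<Rightarrow> bool" where
  "diagP H n V \<longleftrightarrow> (\<forall>x\<in>carr V. x \<noteq> zer V \<longrightarrow> (\<exists>i<n. mact V (Eu H i i) x = x))"

lemma diagP_DD: "diagP G n (DD G n k)"
  unfolding diagP_def
proof (intro ballI impI)
  fix x assume x: "x \<in> carr (DD G n k)" "x \<noteq> zer (DD G n k)"
  from x(1) show "\<exists>i<n. mact (DD G n k) (Eu G i i) x = x"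
  proof (cases rule: carr_DD_cases)
    case (2 c g i)
    have "mact (DD G n k) (Eu G i i) x = x"
      using mact_DD_In[OF In_mat_Eu[OF 2(4) 2(4)], where k=k and c=c and g=g] 2 by (simp add: Eu_def)
    then show ?thesis using 2 by blast
  qed (use x in simp)
qed

lemma diagP_iso:
  assumes V: "rep_obj G n V" and W: "rep_obj G n W" and iso: "rep_iso G n V W" and P: "diagP G n W"
  shows "diagP G n V"
  unfolding diagP_def
proof (intro ballI impI)
  fix x assume x: "x \<in> carr V" "x \<noteq> zer V"
  from iso obtain f h where f: "rep_mor G n V W f" and h: "rep_mor G n W V h"
    and hf: "\<forall>v\<in>carr V. h (f v) = v" and fh: "\<forall>w\<in>carr W. f (h w) = w"
    unfolding rep_iso_def by blast
  have fx: "f x \<in> carr W" using f x unfolding rep_mor_def vect_mor_def by blast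
  have h0: "h (zer W) = zer V" using h unfolding rep_mor_def vect_mor_def by blast
  have "f x \<noteq> zer W" using hf x h0 by metis
  then obtain i where i: "i < n" "mact W (Eu G i i) (f x) = f x" using P fx unfolding diagP_def by blast
  have "h (mact W (Eu G i i) (f x)) = mact V (Eu G i i) (h (f x))"
    using h fx In_mat_Eu[OF i(1) i(1)] unfolding rep_mor_def by blast
  then show "\<exists>i<n. mact V (Eu G i i) x = x" using i hf x by auto
qed


end


context comm_group begin

lemma zer_Ghat[simp]: "zer (Ghat_n G n) = None"
  unfolding Ghat_n_def by simp

lemma le_In_iff: "le_In G n A B \<longleftrightarrow> (\<forall>g i. g \<in> carrier G \<longrightarrow> i < n \<longrightarrow>
    mact (Ghat_n G n) A (Some (g, i)) \<noteq> None \<longrightarrow> mact (Ghat_n G n) B (Some (g, i)) = mact (Ghat_n G n) A (Some (g, i)))"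
  unfolding le_In_def le_End_def carr_Ghat by auto

lemma mact_Ghat_col: "(\<forall>p. X p q = Y p q) \<Longrightarrow> mact (Ghat_n G n) X (Some (g, q)) = mact (Ghat_n G n) Y (Some (g, q))"
  unfolding Ghat_n_def by simp

lemma colEq:
  assumes A: "In_mat G n A" and J: "In_mat G n J" and le: "le_In G n A J" and Ajl: "A j l \<noteq> None"
  shows "\<forall>p. J p l = A p l"
proof -
  have e: "j < n" "l < n" "the (A j l) \<in> carrier G" using In_mat_entry[OF A Ajl] by auto
  have mA: "mact (Ghat_n G n) A (Some (\<one>, l)) = Some (the (A j l) \<otimes> \<one>, j)"
    using mact_Ghat_some[where A=A and j=j and l=l and n=n and g=\<one>] In_mat_col[OF A Ajl] Ajl by blast
  hence mJ: "mact (Ghat_n G n) J (Some (\<one>, l)) = Some (the (A j l) \<otimes> \<one>, j)"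
    using le e unfolding le_In_iff by auto
  have "\<exists>j'. J j' l \<noteq> None"
  proof (rule ccontr)
    assume "\<not> (\<exists>j'. J j' l \<noteq> None)"
    hence "\<forall>j'. J j' l = None" by blast
    from mact_Ghat_none[where A=J and l=l and n=n and g=\<one>, OF this] mJ show False by simp
  qed
  then obtain j' where Jj': "J j' l \<noteq> None" by blast
  have e': "the (J j' l) \<in> carrier G" using In_mat_entry[OF J Jj'] by auto
  have "mact (Ghat_n G n) J (Some (\<one>, l)) = Some (the (J j' l) \<otimes> \<one>, j')"
    using mact_Ghat_some[where A=J and j=j' and l=l and n=n and g=\<one>] In_mat_col[OF J Jj'] Jj' by blast
  with mJ have "j' = j" "the (J j' l) = the (A j l)" using e e' by auto
  hence "J j l = A j l" using Jj' Ajl by auto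
  moreover have "\<forall>p. p \<noteq> j \<longrightarrow> J p l = None \<and> A p l = None"
    using In_mat_col[OF A Ajl] In_mat_col[OF J Jj'] \<open>j' = j\<close> by blast
  ultimately show ?thesis by metis
qed

lemma mmul_col_zero:
  assumes "In_mat G n X" "l < n" "\<forall>p. X p l = None"
  shows "mmul G n X (Eu G l l) = zero_mat"
  using mmul_Eu_right[OF assms(1,2)] assms(3) by (simp add: zero_mat_def fun_eq_iff)

lemma act_col:
  assumes V: "rep_obj G n V" and X: "In_mat G n X" and x: "x \<in> carr V" and l: "l < n"
    and fx: "mact V (Eu G l l) x = x"
  shows "mact V X x = mact V (mmul G n X (Eu G l l)) x"
  using ro_mul[OF V X In_mat_Eu[OF l l] x] fx by simp

lemma act_col_nz:
  assumes V: "rep_obj G n V" and X: "In_mat G n X" and x: "x \<in> carr V" and l: "l < n"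
    and fx: "mact V (Eu G l l) x = x" and nz: "mact V X x \<noteq> zer V"
  shows "\<exists>j. X j l \<noteq> None"
proof (rule ccontr)
  assume "\<not> (\<exists>j. X j l \<noteq> None)"
  hence "\<forall>p. X p l = None" by blast
  hence "mact V X x = mact V zero_mat x" using act_col[OF V X x l fx] mmul_col_zero[OF X l] by simp
  thus False using ro_zero[OF V x] nz by simp
qed

lemma diagP_repM:
  assumes V: "rep_obj G n V" and P: "diagP G n V"
  shows "rep_M G n V"
  unfolding rep_M_def
proof (intro conjI allI impI)
  show "rep_obj G n V" by (rule V)
  fix S J assume S: "S \<subseteq> {A. In_mat G n A}" and JJ: "is_join_In G n S J"
  have J: "In_mat G n J" and ub: "\<forall>A\<in>S. le_In G n A J"
    and lst: "\<And>B. In_mat G n B \<Longrightarrow> \<forall>A\<in>S. le_In G n A B \<Longrightarrow> le_In G n J B"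
    using JJ unfolding is_join_In_def by blast+
  have key: "mact V J x = mact V A x" if A: "A \<in> S" and x: "x \<in> carr V" and l: "l < n"
    and fx: "mact V (Eu G l l) x = x" and Aj: "A j l \<noteq> None" for A x l j
  proof -
    have Ai: "In_mat G n A" using S A by blast
    have "\<forall>p. J p l = A p l" using colEq[OF Ai J _ Aj] ub A by blast
    hence "mmul G n J (Eu G l l) = mmul G n A (Eu G l l)"
      using mmul_Eu_right[OF J l] mmul_Eu_right[OF Ai l] by (simp add: fun_eq_iff)
    thus ?thesis using act_col[OF V J x l fx] act_col[OF V Ai x l fx] by simp
  qed
  show "is_join_End G V (mact V ` S) (mact V J)"
    unfolding is_join_End_def
  proof (intro conjI ballI allI impI)
    show "vect_mor G V V (mact V J)" by (rule ro_mor[OF V J])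
  next
    fix A' assume "A' \<in> mact V ` S"
    then obtain A where A: "A \<in> S" and A': "A' = mact V A" by blast
    have Ai: "In_mat G n A" using S A by blast
    show "le_End V A' (mact V J)"
      unfolding le_End_def A'
    proof (intro ballI impI)
      fix x assume x: "x \<in> carr V" and nz: "mact V A x \<noteq> zer V"
      have "x \<noteq> zer V" using nz ro_zer[OF V Ai] by auto
      then obtain l where l: "l < n" "mact V (Eu G l l) x = x" using P x unfolding diagP_def by blast
      obtain j where "A j l \<noteq> None" using act_col_nz[OF V Ai x l nz] by blast
      then show "mact V J x = mact V A x" using key A x l by blast
    qed
  next
    fix B assume Bm: "vect_mor G V V B" and Bub: "\<forall>A'\<in>mact V ` S. le_End V A' B"
    show "le_End V (mact V J) B"
      unfolding le_End_def
    proof (intro ballI impI)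
      fix x assume x: "x \<in> carr V" and nz: "mact V J x \<noteq> zer V"
      have "x \<noteq> zer V" using nz ro_zer[OF V J] by auto
      then obtain l where l: "l < n" "mact V (Eu G l l) x = x" using P x unfolding diagP_def by blast
      obtain j where Jj: "J j l \<noteq> None" using act_col_nz[OF V J x l nz] by blast
      have "\<exists>A\<in>S. \<exists>j. A j l \<noteq> None"
      proof (rule ccontr)
        assume no: "\<not> (\<exists>A\<in>S. \<exists>j. A j l \<noteq> None)"
        define J' where "J' = (\<lambda>p q. if q = l then None else J p q)"
        have sub: "J' p q \<noteq> None \<Longrightarrow> J' p q = J p q \<and> J p q \<noteq> None" for p q
          by (cases "q = l") (simp_all add: J'_def)
        have h1: "\<forall>i j. J' i j \<noteq> None \<longrightarrow> i < n \<and> j < n \<and> the (J' i j) \<in> carrier G"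
          using sub In_mat_entry[OF J] by metis
        have h2: "\<forall>i j j'. J' i j \<noteq> None \<longrightarrow> J' i j' \<noteq> None \<longrightarrow> j = j'"
          using sub In_mat_row[OF J] by metis
        have h3: "\<forall>i i' j. J' i j \<noteq> None \<longrightarrow> J' i' j \<noteq> None \<longrightarrow> i = i'"
          using sub In_mat_col[OF J] by metis
        have J'i: "In_mat G n J'" unfolding In_mat_def using h1 h2 h3 by blast
        have "\<forall>A\<in>S. le_In G n A J'"
        proof
          fix A assume A: "A \<in> S"
          show "le_In G n A J'"
            unfolding le_In_iff
          proof (intro allI impI)
            fix g q assume g: "g \<in> carrier G" and q: "q < n" and nzA: "mact (Ghat_n G n) A (Some (g, q)) \<noteq> None"
            have "q \<noteq> l"
            proof
              assume "q = l"
              hence "\<forall>p. A p q = None" using no A by blast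
              thus False using nzA mact_Ghat_none[where A=A and l=q and n=n and g=g] by simp
            qed
            hence "mact (Ghat_n G n) J' (Some (g, q)) = mact (Ghat_n G n) J (Some (g, q))"
              by (intro mact_Ghat_col) (simp add: J'_def)
            also have "\<dots> = mact (Ghat_n G n) A (Some (g, q))"
              using ub A g q nzA unfolding le_In_iff by blast
            finally show "mact (Ghat_n G n) J' (Some (g, q)) = mact (Ghat_n G n) A (Some (g, q))" .
          qed
        qed
        hence le: "le_In G n J J'" using lst[OF J'i] by blast
        have "mact (Ghat_n G n) J (Some (\<one>, l)) \<noteq> None"
          using mact_Ghat_some[where A=J and j=j and l=l and n=n and g=\<one>, OF Jj In_mat_col[OF J Jj]] by simp
        moreover have "mact (Ghat_n G n) J' (Some (\<one>, l)) = None"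
          by (rule mact_Ghat_none) (simp add: J'_def)
        moreover have "mact (Ghat_n G n) J' (Some (\<one>, l)) = mact (Ghat_n G n) J (Some (\<one>, l))"
          using le l(1) calculation(1) one_closed unfolding le_In_iff by blast
        ultimately show False by simp
      qed
      then obtain A j' where A: "A \<in> S" and Aj: "A j' l \<noteq> None" by blast
      have Ai: "In_mat G n A" using S A by blast
      have eq: "mact V J x = mact V A x" using key[OF A x l(1) l(2) Aj] .
      have "le_End V (mact V A) B" using Bub A by blast
      thus "B x = mact V J x" using x nz eq unfolding le_End_def by auto
    qed
  qed
qed

end


context comm_group begin

lemma join_diag: "is_join_In G n ((\<lambda>i. Eu G i i) ` {..<n}) (scal_mat n \<one>)"
  unfolding is_join_In_def
proof (intro conjI ballI allI impI)
  show "In_mat G n (scal_mat n \<one>)" by (rule In_mat_scal) simp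
next
  fix A assume "A \<in> (\<lambda>i. Eu G i i) ` {..<n}"
  then obtain i where i: "i < n" "A = Eu G i i" by blast
  show "le_In G n A (scal_mat n \<one>)"
    unfolding le_In_iff i(2) mact_Ghat_Eu mact_Ghat_scal using i by auto
next
  fix B assume B: "In_mat G n B" and ub: "\<forall>A\<in>(\<lambda>i. Eu G i i) ` {..<n}. le_In G n A B"
  show "le_In G n (scal_mat n \<one>) B"
    unfolding le_In_iff
  proof (intro allI impI)
    fix g l assume g: "g \<in> carrier G" and l: "l < n"
      and "mact (Ghat_n G n) (scal_mat n \<one>) (Some (g, l)) \<noteq> None"
    have "le_In G n (Eu G l l) B" using ub l by blast
    hence "mact (Ghat_n G n) B (Some (g, l)) = mact (Ghat_n G n) (Eu G l l) (Some (g, l))"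
      using g l unfolding le_In_iff mact_Ghat_Eu by auto
    thus "mact (Ghat_n G n) B (Some (g, l)) = mact (Ghat_n G n) (scal_mat n \<one>) (Some (g, l))"
      unfolding mact_Ghat_Eu mact_Ghat_scal using l by simp
  qed
qed

lemma repM_diagP:
  assumes M: "rep_M G n V"
  shows "diagP G n V"
proof -
  have V: "rep_obj G n V" using M unfolding rep_M_def by blast
  have vo: "vect_obj G V" by (rule ro_vo[OF V])
  let ?S = "(\<lambda>i. Eu G i i) ` {..<n}"
  have Sin: "?S \<subseteq> {A. In_mat G n A}" using In_mat_Eu by auto
  have JE: "is_join_End G V (mact V ` ?S) (mact V (scal_mat n \<one>))"
    using M Sin join_diag unfolding rep_M_def by blast
  have fixd: "mact V (Eu G i i) x = x" if i: "i < n" and x: "x \<in> carr V"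
    and nz: "mact V (Eu G i i) x \<noteq> zer V" for i x
  proof -
    have "le_End V (mact V (Eu G i i)) (mact V (scal_mat n \<one>))"
      using JE i unfolding is_join_End_def by blast
    hence "mact V (scal_mat n \<one>) x = mact V (Eu G i i) x" using x nz unfolding le_End_def by blast
    thus ?thesis using ro_id[OF V x] by simp
  qed
  define Bm where "Bm = (\<lambda>x. if \<exists>i<n. mact V (Eu G i i) x \<noteq> zer V then x else zer V)"
  have cond: "(\<exists>i<n. mact V (Eu G i i) (gact V g x) \<noteq> zer V) \<longleftrightarrow> (\<exists>i<n. mact V (Eu G i i) x \<noteq> zer V)"
    if g: "g \<in> carrier G" and x: "x \<in> carr V" for g x
  proof -
    have "mact V (Eu G i i) (gact V g x) \<noteq> zer V \<longleftrightarrow> mact V (Eu G i i) x \<noteq> zer V" if i: "i < n" for i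
    proof -
      have e: "mact V (Eu G i i) (gact V g x) = gact V g (mact V (Eu G i i) x)"
        using ro_gact[OF V In_mat_Eu[OF i i] g x] .
      have c: "mact V (Eu G i i) x \<in> carr V" using ro_closed[OF V In_mat_Eu[OF i i] x] .
      show ?thesis unfolding e using vo_nz[OF vo g c] vo_gzer[OF vo g] by metis
    qed
    thus ?thesis by blast
  qed
  have Bmor: "vect_mor G V V Bm"
    unfolding vect_mor_def
  proof (intro conjI ballI impI)
    fix v assume "v \<in> carr V" thus "Bm v \<in> carr V" using vo_zer[OF vo] by (simp add: Bm_def)
  next
    show "Bm (zer V) = zer V" by (simp add: Bm_def)
  next
    fix g v assume g: "g \<in> carrier G" and v: "v \<in> carr V"
    show "Bm (gact V g v) = gact V g (Bm v)"
      unfolding Bm_def using cond[OF g v] vo_gzer[OF vo g] by auto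
  next
    fix v1 v2 assume "v1 \<in> carr V" "v2 \<in> carr V" "Bm v1 = Bm v2" "Bm v1 \<noteq> zer V"
    hence "v1 = v2" unfolding Bm_def by (auto split: if_splits)
    thus "orbit G V v1 = orbit G V v2" by simp
  qed
  have "\<forall>A\<in>mact V ` ?S. le_End V A Bm"
  proof
    fix A assume "A \<in> mact V ` ?S"
    then obtain i where i: "i < n" "A = mact V (Eu G i i)" by blast
    show "le_End V A Bm"
      unfolding le_End_def i(2)
    proof (intro ballI impI)
      fix x assume x: "x \<in> carr V" and nz: "mact V (Eu G i i) x \<noteq> zer V"
      have "Bm x = x" unfolding Bm_def using i nz by auto
      thus "Bm x = mact V (Eu G i i) x" using fixd[OF i(1) x nz] by simp
    qed
  qed
  hence le: "le_End V (mact V (scal_mat n \<one>)) Bm" using JE Bmor unfolding is_join_End_def by blast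
  show ?thesis
    unfolding diagP_def
  proof (intro ballI impI)
    fix x assume x: "x \<in> carr V" and nz: "x \<noteq> zer V"
    have "Bm x = x" using le x nz ro_id[OF V x] unfolding le_End_def by metis
    hence "\<exists>i<n. mact V (Eu G i i) x \<noteq> zer V" using nz unfolding Bm_def by (auto split: if_splits)
    then obtain i where "i < n" "mact V (Eu G i i) x \<noteq> zer V" by blast
    thus "\<exists>i<n. mact V (Eu G i i) x = x" using fixd x by blast
  qed
qed

end


context comm_group begin

lemma mmul_Eu_Eu: "i < n \<Longrightarrow> l < n \<Longrightarrow> mmul G n (Eu G i l) (Eu G l m) = Eu G i m"
  using mmul_Eu_right[OF In_mat_Eu, of i n l l m] by (simp add: Eu_def fun_eq_iff)

lemma mmul_Eu_Eu_ne: "i < n \<Longrightarrow> l < n \<Longrightarrow> l' < n \<Longrightarrow> l \<noteq> l' \<Longrightarrow> mmul G n (Eu G i l) (Eu G l' m) = zero_mat"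
  using mmul_Eu_right[OF In_mat_Eu, of i n l l' m] by (simp add: Eu_def fun_eq_iff zero_mat_def)

lemma iso_from_bij:
  assumes D: "rep_obj G n D" and V: "rep_obj G n V" and h: "rep_mor G n D V h"
    and bij: "bij_betw h (carr D) (carr V)"
  shows "rep_iso G n V D"
proof -
  define f where "f = inv_into (carr D) h"
  have inj: "inj_on h (carr D)" and surj: "h ` carr D = carr V" using bij unfolding bij_betw_def by auto
  have fin: "f v \<in> carr D" if "v \<in> carr V" for v using that surj unfolding f_def by (metis inv_into_into)
  have hf: "h (f v) = v" if "v \<in> carr V" for v using that surj unfolding f_def by (metis f_inv_into_f)
  have fh: "f (h w) = w" if "w \<in> carr D" for w using that inj unfolding f_def by (metis inv_into_f_f)
  have hm: "vect_mor G D V h" and hA: "\<And>A w. In_mat G n A \<Longrightarrow> w \<in> carr D \<Longrightarrow> h (mact D A w) = mact V A (h w)"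
    using h unfolding rep_mor_def by blast+
  have h0: "h (zer D) = zer V" and hg: "\<And>g w. g \<in> carrier G \<Longrightarrow> w \<in> carr D \<Longrightarrow> h (gact D g w) = gact V g (h w)"
    using hm unfolding vect_mor_def by blast+
  have voD: "vect_obj G D" by (rule ro_vo[OF D])
  have "rep_mor G n V D f"
    unfolding rep_mor_def vect_mor_def
  proof (intro conjI ballI allI impI)
    fix v assume "v \<in> carr V" thus "f v \<in> carr D" by (rule fin)
  next
    show "f (zer V) = zer D" using fh[OF vo_zer[OF voD]] h0 by simp
  next
    fix g v assume g: "g \<in> carrier G" and v: "v \<in> carr V"
    have w: "gact D g (f v) \<in> carr D" using vo_closed[OF voD g fin[OF v]] .
    have "h (gact D g (f v)) = gact V g v" using hg[OF g fin[OF v]] hf[OF v] by simp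
    thus "f (gact V g v) = gact D g (f v)" using fh[OF w] by metis
  next
    fix v1 v2 assume "v1 \<in> carr V" "v2 \<in> carr V" "f v1 = f v2"
    hence "v1 = v2" using hf by metis
    thus "orbit G V v1 = orbit G V v2" by simp
  next
    fix A v assume A: "In_mat G n A" and v: "v \<in> carr V"
    have w: "mact D A (f v) \<in> carr D" using ro_closed[OF D A fin[OF v]] .
    have "h (mact D A (f v)) = mact V A v" using hA[OF A fin[OF v]] hf[OF v] by simp
    thus "f (mact V A v) = mact D A (f v)" using fh[OF w] by metis
  qed
  thus ?thesis unfolding rep_iso_def using h hf fh by blast
qed

lemma orbit_self: "vect_obj G V \<Longrightarrow> y \<in> carr V \<Longrightarrow> y \<in> orbit G V y"
  unfolding orbit_def using vo_one[of V y] by force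

lemma orbit_gact:
  assumes vo: "vect_obj G V" and y: "y \<in> carr V" and g: "g \<in> carrier G"
  shows "orbit G V (gact V g y) = orbit G V y"
proof
  show "orbit G V (gact V g y) \<subseteq> orbit G V y"
  proof
    fix z assume "z \<in> orbit G V (gact V g y)"
    then obtain x where x: "x \<in> carrier G" "z = gact V x (gact V g y)" unfolding orbit_def by blast
    hence "z = gact V (x \<otimes> g) y" using vo_mult[OF vo x(1) g y] by simp
    thus "z \<in> orbit G V y" unfolding orbit_def using x g by blast
  qed
next
  show "orbit G V y \<subseteq> orbit G V (gact V g y)"
  proof
    fix z assume "z \<in> orbit G V y"
    then obtain x where x: "x \<in> carrier G" "z = gact V x y" unfolding orbit_def by blast
    have "gact V (x \<otimes> inv g) (gact V g y) = gact V ((x \<otimes> inv g) \<otimes> g) y"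
      using vo_mult[OF vo _ g y, of "x \<otimes> inv g"] x g by simp
    also have "(x \<otimes> inv g) \<otimes> g = x" using x g by (simp add: m_assoc)
    finally have "z = gact V (x \<otimes> inv g) (gact V g y)" using x by simp
    moreover have "x \<otimes> inv g \<in> carrier G" using x g by simp
    ultimately show "z \<in> orbit G V (gact V g y)" unfolding orbit_def by blast
  qed
qed

end


context comm_group begin

lemma diagP_iso_DD:
  assumes V: "rep_obj G n V" and P: "diagP G n V" and fin: "finite (carrier G)" and n0: "0 < n"
  shows "\<exists>k. rep_iso G n V (DD G n k)"
proof -
  have vo: "vect_obj G V" by (rule ro_vo[OF V])
  have finV: "finite (carr V)" using vo unfolding vect_obj_def by blast
  define V0 where "V0 = {y \<in> carr V. y \<noteq> zer V \<and> mact V (Eu G 0 0) y = y}"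
  have finO: "finite (orbit G V ` V0)" using finV unfolding V0_def by simp
  obtain k :: nat and e :: "nat \<Rightarrow> 'c set" where ke: "orbit G V ` V0 = e ` {i. i < k}" and inj: "inj_on e {i. i < k}"
    using finite_imp_nat_seg_image_inj_on[OF finO] by blast
  define r where "r c = (SOME y. y \<in> V0 \<and> orbit G V y = e c)" for c
  have r: "r c \<in> V0 \<and> orbit G V (r c) = e c" if "c < k" for c
  proof -
    have "e c \<in> orbit G V ` V0" using ke that by blast
    then obtain y where "y \<in> V0 \<and> orbit G V y = e c" by blast
    thus ?thesis unfolding r_def by (rule someI)
  qed
  have rc: "r c \<in> carr V" "r c \<noteq> zer V" "mact V (Eu G 0 0) (r c) = r c" if "c < k" for c
    using r[OF that] unfolding V0_def by auto
  define h where "h x = (case x of None \<Rightarrow> zer V | Some (c, None) \<Rightarrow> zer V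
     | Some (c, Some (g, i)) \<Rightarrow> gact V g (mact V (Eu G i 0) (r c)))" for x
  have hS: "h (Some (c, Some (g, i))) = gact V g (mact V (Eu G i 0) (r c))" for c g i
    unfolding h_def by simp
  have hN: "h None = zer V" unfolding h_def by simp
  have Ei0: "mact V (Eu G i 0) (r c) \<in> carr V" if "c < k" "i < n" for c i
    using ro_closed[OF V In_mat_Eu[OF that(2) n0] rc(1)[OF that(1)]] .
  have hcarr: "h (Some (c, Some (g, i))) \<in> carr V" if "c < k" "i < n" "g \<in> carrier G" for c g i
    unfolding hS using vo_closed[OF vo that(3) Ei0[OF that(1,2)]] .
  have h0i: "mact V (Eu G 0 i) (h (Some (c, Some (g, i)))) = gact V g (r c)"
    if "c < k" "i < n" "g \<in> carrier G" for c g i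
  proof -
    have "mact V (Eu G 0 i) (h (Some (c, Some (g, i)))) = gact V g (mact V (Eu G 0 i) (mact V (Eu G i 0) (r c)))"
      unfolding hS using ro_gact[OF V In_mat_Eu[OF n0 that(2)] that(3) Ei0[OF that(1,2)]] .
    also have "mact V (Eu G 0 i) (mact V (Eu G i 0) (r c)) = mact V (mmul G n (Eu G 0 i) (Eu G i 0)) (r c)"
      using ro_mul[OF V In_mat_Eu[OF n0 that(2)] In_mat_Eu[OF that(2) n0] rc(1)[OF that(1)]] by simp
    also have "\<dots> = r c" using mmul_Eu_Eu[OF n0 that(2), of 0] rc(3)[OF that(1)] by simp
    finally show ?thesis .
  qed
  have hnz: "h (Some (c, Some (g, i))) \<noteq> zer V" if "c < k" "i < n" "g \<in> carrier G" for c g i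
  proof
    assume "h (Some (c, Some (g, i))) = zer V"
    hence "mact V (Eu G 0 i) (h (Some (c, Some (g, i)))) = zer V" using ro_zer[OF V In_mat_Eu[OF n0 that(2)]] by simp
    thus False using h0i[OF that] vo_nz[OF vo that(3) rc(1,2)[OF that(1)]] by simp
  qed
  have hEii: "mact V (Eu G l l) (h (Some (c, Some (g, i)))) = (if l = i then h (Some (c, Some (g, i))) else zer V)"
    if "c < k" "i < n" "g \<in> carrier G" "l < n" for c g i l
  proof -
    have "mact V (Eu G l l) (h (Some (c, Some (g, i)))) = gact V g (mact V (Eu G l l) (mact V (Eu G i 0) (r c)))"
      unfolding hS using ro_gact[OF V In_mat_Eu[OF that(4) that(4)] that(3) Ei0[OF that(1,2)]] .
    also have "mact V (Eu G l l) (mact V (Eu G i 0) (r c)) = mact V (mmul G n (Eu G l l) (Eu G i 0)) (r c)"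
      using ro_mul[OF V In_mat_Eu[OF that(4) that(4)] In_mat_Eu[OF that(2) n0] rc(1)[OF that(1)]] by simp
    finally have eq: "mact V (Eu G l l) (h (Some (c, Some (g, i)))) = gact V g (mact V (mmul G n (Eu G l l) (Eu G i 0)) (r c))" .
    show ?thesis
    proof (cases "l = i")
      case True
      then show ?thesis using eq mmul_Eu_Eu[OF that(4) that(4), of 0] hS by simp
    next
      case False
      then show ?thesis using eq mmul_Eu_Eu_ne[OF that(4) that(4) that(2) False, of 0]
        ro_zero[OF V rc(1)[OF that(1)]] vo_gzer[OF vo that(3)] by simp
    qed
  qed
  have hinj: "inj_on h (carr (DD G n k))"
  proof (rule inj_onI)
    fix x1 x2 assume x1: "x1 \<in> carr (DD G n k)" and x2: "x2 \<in> carr (DD G n k)" and eq: "h x1 = h x2"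
    show "x1 = x2"
    proof (cases "x1 = None")
      case True
      with x2 eq show ?thesis using hN hnz by (cases rule: carr_DD_cases) auto
    next
      case False
      with x1 obtain c1 g1 i1 where a: "x1 = Some (c1, Some (g1, i1))" "c1 < k" "g1 \<in> carrier G" "i1 < n"
        by (cases rule: carr_DD_cases) auto
      from x2 eq obtain c2 g2 i2 where b: "x2 = Some (c2, Some (g2, i2))" "c2 < k" "g2 \<in> carrier G" "i2 < n"
        using hN hnz[OF a(2,4,3)] a(1) by (cases rule: carr_DD_cases) auto
      have "i1 = i2"
      proof (rule ccontr)
        assume ne: "i1 \<noteq> i2"
        have "mact V (Eu G i1 i1) (h x1) = h x1" using hEii[OF a(2,4,3) a(4)] a(1) by simp
        moreover have "mact V (Eu G i1 i1) (h x2) = zer V" using hEii[OF b(2,4,3) a(4)] b(1) ne by simp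
        ultimately show False using eq hnz[OF a(2,4,3)] a(1) by simp
      qed
      have gg: "gact V g1 (r c1) = gact V g2 (r c2)"
        using h0i[OF a(2,4,3)] h0i[OF b(2,4,3)] eq a(1) b(1) \<open>i1 = i2\<close> by simp
      have "e c1 = e c2"
        using orbit_gact[OF vo rc(1)[OF a(2)] a(3)] orbit_gact[OF vo rc(1)[OF b(2)] b(3)] gg r[OF a(2)] r[OF b(2)] by simp
      hence cc: "c1 = c2" using inj a(2) b(2) unfolding inj_on_def by blast
      have "gact V (inv g2 \<otimes> g1) (r c1) = gact V (inv g2) (gact V g2 (r c1))"
        using vo_mult[OF vo _ a(3) rc(1)[OF a(2)], of "inv g2"] gg cc b(3) by simp
      also have "\<dots> = r c1" using vo_inv[OF vo b(3) rc(1)[OF a(2)]] .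
      finally have "inv g2 \<otimes> g1 = \<one>" using vo_free[OF vo _ rc(1,2)[OF a(2)]] b(3) a(3) by simp
      hence "g1 = g2" using a(3) b(3) by (metis inv_equality inv_inv inv_closed)
      thus ?thesis using a(1) b(1) cc \<open>i1 = i2\<close> by simp
    qed
  qed
  have hsurj: "h ` carr (DD G n k) = carr V"
  proof
    show "h ` carr (DD G n k) \<subseteq> carr V"
    proof
      fix y assume "y \<in> h ` carr (DD G n k)"
      then obtain x where x: "x \<in> carr (DD G n k)" "y = h x" by blast
      from x(1) show "y \<in> carr V" using x(2) hN vo_zer[OF vo] hcarr by (cases rule: carr_DD_cases) auto
    qed
  next
    show "carr V \<subseteq> h ` carr (DD G n k)"
    proof
      fix y assume y: "y \<in> carr V"
      show "y \<in> h ` carr (DD G n k)"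
      proof (cases "y = zer V")
        case True
        then show ?thesis using hN by (force simp: carr_DD)
      next
        case False
        then obtain i where i: "i < n" "mact V (Eu G i i) y = y" using P y unfolding diagP_def by blast
        define z where "z = mact V (Eu G 0 i) y"
        have zc: "z \<in> carr V" unfolding z_def using ro_closed[OF V In_mat_Eu[OF n0 i(1)] y] .
        have z0: "mact V (Eu G 0 0) z = z"
          unfolding z_def using ro_mul[OF V In_mat_Eu[OF n0 n0] In_mat_Eu[OF n0 i(1)] y] mmul_Eu_Eu[OF n0 n0, of i] by simp
        have zi: "mact V (Eu G i 0) z = y"
          unfolding z_def using ro_mul[OF V In_mat_Eu[OF i(1) n0] In_mat_Eu[OF n0 i(1)] y] mmul_Eu_Eu[OF i(1) n0, of i] i(2) by simp
        have znz: "z \<noteq> zer V" using zi False ro_zer[OF V In_mat_Eu[OF i(1) n0]] by auto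
        have "z \<in> V0" unfolding V0_def using zc z0 znz by blast
        then obtain c where c: "c < k" "orbit G V z = e c" using ke by blast
        have "z \<in> orbit G V (r c)" using orbit_self[OF vo zc] c r[OF c(1)] by simp
        then obtain g where g: "g \<in> carrier G" "z = gact V g (r c)" unfolding orbit_def by blast
        have "h (Some (c, Some (g, i))) = mact V (Eu G i 0) (gact V g (r c))"
          unfolding hS using ro_gact[OF V In_mat_Eu[OF i(1) n0] g(1) rc(1)[OF c(1)]] by simp
        also have "\<dots> = y" using zi g(2) by simp
        finally show ?thesis using c(1) g(1) i(1) by (force simp: carr_DD)
      qed
    qed
  qed
  have hmor: "rep_mor G n (DD G n k) V h"
    unfolding rep_mor_def vect_mor_def
  proof (intro conjI ballI allI impI)
    fix v assume "v \<in> carr (DD G n k)" thus "h v \<in> carr V" using hsurj by blast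
  next
    show "h (zer (DD G n k)) = zer V" using hN by simp
  next
    fix g v assume g: "g \<in> carrier G" and v: "v \<in> carr (DD G n k)"
    from v show "h (gact (DD G n k) g v) = gact V g (h v)"
    proof (cases rule: carr_DD_cases)
      case 1 then show ?thesis using hN vo_gzer[OF vo g] by simp
    next
      case (2 c x i)
      then show ?thesis unfolding hS using vo_mult[OF vo g 2(3) Ei0[OF 2(2,4)]] by (simp add: hS)
    qed
  next
    fix v1 v2 assume "v1 \<in> carr (DD G n k)" "v2 \<in> carr (DD G n k)" "h v1 = h v2"
    hence "v1 = v2" using hinj unfolding inj_on_def by blast
    thus "orbit G (DD G n k) v1 = orbit G (DD G n k) v2" by simp
  next
    fix A v assume A: "In_mat G n A" and v: "v \<in> carr (DD G n k)"
    from v show "h (mact (DD G n k) A v) = mact V A (h v)"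
    proof (cases rule: carr_DD_cases)
      case 1 then show ?thesis using hN ro_zer[OF V A] by simp
    next
      case (2 c x i)
      note cx = 2
      have rhs: "mact V A (h v) = gact V x (mact V (mmul G n A (Eu G i 0)) (r c))"
        using cx hS ro_gact[OF V A cx(3) Ei0[OF cx(2,4)]] ro_mul[OF V A In_mat_Eu[OF cx(4) n0] rc(1)[OF cx(2)]] by simp
      have mm: "mmul G n A (Eu G i 0) = (\<lambda>p q. if q = 0 then A p i else None)"
        using mmul_Eu_right[OF A cx(4)] .
      show ?thesis
      proof (cases rule: mact_DD_cases[OF A, of i k c x])
        case (1 j)
        let ?a = "the (A j i)"
        have Aji: "A j i = Some ?a" using 1(1) by auto
        have "mmul G n A (Eu G i 0) = mmul G n (scal_mat n ?a) (Eu G j 0)"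
          unfolding mm mmul_Eu_right[OF In_mat_scal[OF 1(3)] 1(2)]
          using In_mat_col[OF A 1(1)] Aji 1(2) by (auto simp: fun_eq_iff scal_mat_def)
        hence "mact V (mmul G n A (Eu G i 0)) (r c) = gact V ?a (mact V (Eu G j 0) (r c))"
          using ro_mul[OF V In_mat_scal[OF 1(3)] In_mat_Eu[OF 1(2) n0] rc(1)[OF cx(2)]]
            ro_scal[OF V 1(3) Ei0[OF cx(2) 1(2)]] by simp
        hence "mact V A (h v) = gact V (x \<otimes> ?a) (mact V (Eu G j 0) (r c))"
          using rhs vo_mult[OF vo cx(3) 1(3) Ei0[OF cx(2) 1(2)]] by simp
        moreover have "h (mact (DD G n k) A v) = gact V (?a \<otimes> x) (mact V (Eu G j 0) (r c))"
          using 1(4) cx(1) hS by simp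
        ultimately show ?thesis using m_comm[OF 1(3) cx(3)] by simp
      next
        case 2
        have "mmul G n A (Eu G i 0) = zero_mat" unfolding mm using 2(1) by (simp add: fun_eq_iff zero_mat_def)
        hence "mact V A (h v) = zer V" using rhs ro_zero[OF V rc(1)[OF cx(2)]] vo_gzer[OF vo cx(3)] by simp
        then show ?thesis using 2(2) cx(1) hN by simp
      qed
    qed
  qed
  have "rep_iso G n V (DD G n k)"
    by (rule iso_from_bij[OF rep_obj_DD[OF fin] V hmor]) (simp add: bij_betw_def hinj hsurj)
  thus ?thesis by blast
qed

end

theorem mainTheorem15:
  fixes G :: "('g, 'b) monoid_scheme" and n :: nat and V :: "('g, 'v) gobj"
  assumes "comm_group G" and "finite (carrier G)" and "0 < n"
    and "rep_obj G n V"
  shows "(\<forall>k::nat. rep_obj G n (dsum {..<k} (\<lambda>_. Ghat_n G n))) \<and>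
         (rep_M G n V \<longleftrightarrow> (\<exists>k::nat. rep_iso G n V (dsum {..<k} (\<lambda>_. Ghat_n G n))))"
proof -
  interpret comm_group G by (rule assms(1))
  have D: "\<forall>k::nat. rep_obj G n (dsum {..<k} (\<lambda>_. Ghat_n G n))"
    using rep_obj_DD[OF assms(2)] by blast
  moreover have "rep_M G n V \<longleftrightarrow> (\<exists>k::nat. rep_iso G n V (dsum {..<k} (\<lambda>_. Ghat_n G n)))"
  proof
    assume "rep_M G n V"
    hence "diagP G n V" by (rule repM_diagP)
    thus "\<exists>k::nat. rep_iso G n V (dsum {..<k} (\<lambda>_. Ghat_n G n))"
      using diagP_iso_DD[OF assms(4) _ assms(2) assms(3)] by blast
  next
    assume "\<exists>k::nat. rep_iso G n V (dsum {..<k} (\<lambda>_. Ghat_n G n))"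
    then obtain k :: nat where iso: "rep_iso G n V (DD G n k)" by blast
    have "diagP G n V" using diagP_iso[OF assms(4) rep_obj_DD[OF assms(2)] iso diagP_DD] .
    thus "rep_M G n V" using diagP_repM[OF assms(4)] by blast
  qed
  ultimately show ?thesis by blast
qed

end
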